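(* Let $w$ be a weight with $w>0$ a.e., let $\sigma=w^{-1}$, and suppose $K:=\|M\|_{L^2(\sigma)\to L^2(\sigma)}<\infty$. Then for every $f\in L^2(w)$, $$\|Hf\|_{L^{2,\infty}(w)}\le 2\,\varphi_H(2K)\,\|f\|_{L^2(w)},$$ where $\|g\|_{L^{2,\infty}(w)}=\sup_{\alpha>0}\alpha\,\big(w\{x:|g(x)|>\alpha\}\big)^{1/2}$.
   Context: A weight is a non-negative locally integrable function on $\mathbb R$; $w(E)=\int_E w$. $Mf(x)=\sup_{I\ni x}\frac1{|I|}\int_I|f|$ over intervals $I\ni x$. $Hf(x)=\mathrm{P.V.}\int_{\mathbb R}\frac{f(y)}{x-y}\,dy$. $[v]_{A_1}=\|Mv/v\|_{L^\infty}$. For $t\ge1$, $\varphi_H(t)=\sup_{[v]_{A_1}\le t}\|H\|_{L^1(v)\to L^{1,\infty}(v)}$ (possibly $+\infty$), where $\|g\|_{L^{1,\infty}(v)}=\sup_{\alpha>0}\alpha\, v\{|g|>\alpha\}$. $L^2(\sigma)$ is the space with norm $(\int|f|^2\sigma)^{1/2}$. *)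

theory Defs
  imports "HOL-Analysis.Analysis"
begin

definition ennsqrt :: "ennreal \<Rightarrow> ennreal" where
  "ennsqrt x = (if x = top then top else ennreal (sqrt (enn2real x)))"

definition is_weight :: "(real \<Rightarrow> real) \<Rightarrow> bool" where
  "is_weight w \<longleftrightarrow> w \<in> borel_measurable lebesgue \<and> (\<forall>x. 0 \<le> w x) \<and>
     (\<forall>a b. set_integrable lebesgue {a..b} w)"

definition wmeas :: "(real \<Rightarrow> real) \<Rightarrow> real set \<Rightarrow> ennreal" where
  "wmeas w E = (\<integral>\<^sup>+ x \<in> E. ennreal (w x) \<partial>lebesgue)"

definition maxf :: "(real \<Rightarrow> real) \<Rightarrow> real \<Rightarrow> ennreal" where
  "maxf f x = (SUP I \<in> {(a, b). a < b \<and> a \<le> x \<and> x \<le> b}.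
      ennreal (1 / (snd I - fst I)) * (\<integral>\<^sup>+ y \<in> {fst I..snd I}. ennreal \<bar>f y\<bar> \<partial>lebesgue))"

definition hilbert :: "(real \<Rightarrow> real) \<Rightarrow> real \<Rightarrow> real" where
  "hilbert f x = Lim (at_right 0)
     (\<lambda>\<epsilon>. \<integral> y. indicator {y. \<epsilon> < \<bar>x - y\<bar>} y * (f y / (x - y)) \<partial>lebesgue)"

definition A1_const :: "(real \<Rightarrow> real) \<Rightarrow> ennreal" where
  "A1_const v = Inf {C. AE x in lebesgue. maxf v x \<le> C * ennreal (v x)}"

definition L1_norm :: "(real \<Rightarrow> real) \<Rightarrow> (real \<Rightarrow> real) \<Rightarrow> ennreal" where
  "L1_norm v f = (\<integral>\<^sup>+ x. ennreal (\<bar>f x\<bar> * v x) \<partial>lebesgue)"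

definition L2_norm :: "(real \<Rightarrow> real) \<Rightarrow> (real \<Rightarrow> real) \<Rightarrow> ennreal" where
  "L2_norm v f = ennsqrt (\<integral>\<^sup>+ x. ennreal ((f x)\<^sup>2 * v x) \<partial>lebesgue)"

definition weak_L1_norm :: "(real \<Rightarrow> real) \<Rightarrow> (real \<Rightarrow> real) \<Rightarrow> ennreal" where
  "weak_L1_norm v g = (SUP \<alpha> \<in> {0<..}. ennreal \<alpha> * wmeas v {x. \<bar>g x\<bar> > \<alpha>})"

definition weak_L2_norm :: "(real \<Rightarrow> real) \<Rightarrow> (real \<Rightarrow> real) \<Rightarrow> ennreal" where
  "weak_L2_norm v g = (SUP \<alpha> \<in> {0<..}. ennreal \<alpha> * ennsqrt (wmeas v {x. \<bar>g x\<bar> > \<alpha>}))"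

definition H_weak11_norm :: "(real \<Rightarrow> real) \<Rightarrow> ennreal" where
  "H_weak11_norm v = Inf {C. \<forall>f. f \<in> borel_measurable lebesgue \<and> L1_norm v f < top \<longrightarrow>
       weak_L1_norm v (hilbert f) \<le> C * L1_norm v f}"

definition phi_H :: "real \<Rightarrow> ennreal" where
  "phi_H t = (SUP v \<in> {v. is_weight v \<and> A1_const v \<le> ennreal t}. H_weak11_norm v)"

definition M_L2_norm :: "(real \<Rightarrow> real) \<Rightarrow> ennreal" where
  "M_L2_norm \<sigma> = Inf {C. \<forall>f. f \<in> borel_measurable lebesgue \<and> L2_norm \<sigma> f < top \<longrightarrow>
       ennsqrt (\<integral>\<^sup>+ x. (maxf f x)\<^sup>2 * ennreal (\<sigma> x) \<partial>lebesgue) \<le> C * L2_norm \<sigma> f}"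

end

theory Submission
  imports Defs
begin

definition Me :: "(real \<Rightarrow> ennreal) \<Rightarrow> real \<Rightarrow> ennreal" where
  "Me g x = (SUP I \<in> {(a, b). a < b \<and> a \<le> x \<and> x \<le> b}.
      ennreal (1 / (snd I - fst I)) * (\<integral>\<^sup>+ y \<in> {fst I..snd I}. g y \<partial>lebesgue))"

lemma ind_Icc_meas[measurable]: "indicator {a..b::real} \<in> borel_measurable lebesgue"
  by (rule borel_measurable_indicator) simp

lemma maxf_Me: "maxf f = Me (\<lambda>y. ennreal \<bar>f y\<bar>)"
  unfolding maxf_def Me_def by (rule ext) simp

lemma Me_mono: assumes "\<And>y. g y \<le> h y" shows "Me g x \<le> Me h x"
  unfolding Me_def
proof (rule SUP_mono)
  fix I assume "I \<in> {(a, b). a < b \<and> a \<le> x \<and> x \<le> b}"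
  then show "\<exists>J\<in>{(a, b). a < b \<and> a \<le> x \<and> x \<le> b}. ennreal (1 / (snd I - fst I)) * (\<integral>\<^sup>+ y \<in> {fst I..snd I}. g y \<partial>lebesgue)
      \<le> ennreal (1 / (snd J - fst J)) * (\<integral>\<^sup>+ y \<in> {fst J..snd J}. h y \<partial>lebesgue)"
    by (intro bexI[of _ I] mult_left_mono nn_integral_mono)
       (auto simp: assms intro!: mult_right_mono)
qed

lemma Me_cong_AE: assumes "AE y in lebesgue. g y = h y" shows "Me g = Me h"
proof -
  have "\<And>A. (\<integral>\<^sup>+ y \<in> A. g y \<partial>lebesgue) = (\<integral>\<^sup>+ y \<in> A. h y \<partial>lebesgue)"
    by (rule nn_integral_cong_AE) (use assms in auto)
  then show ?thesis unfolding Me_def by (intro ext) simp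
qed

lemma Me_avg_le:
  assumes "a < b" "a \<le> x" "x \<le> b"
  shows "ennreal (1 / (b - a)) * (\<integral>\<^sup>+ y \<in> {a..b}. g y \<partial>lebesgue) \<le> Me g x"
  unfolding Me_def by (rule SUP_upper2[of "(a,b)"]) (use assms in auto)

lemma Me_suminf:
  assumes [measurable]: "\<And>k. g k \<in> borel_measurable lebesgue"
  shows "Me (\<lambda>y. \<Sum>k. g k y) x \<le> (\<Sum>k. Me (g k) x)"
  unfolding Me_def[of "\<lambda>y. \<Sum>k. g k y"]
proof (rule SUP_least)
  fix I :: "real \<times> real" assume I: "I \<in> {(a, b). a < b \<and> a \<le> x \<and> x \<le> b}"
  have "(\<integral>\<^sup>+ y \<in> {fst I..snd I}. (\<Sum>k. g k y) \<partial>lebesgue) = (\<Sum>k. \<integral>\<^sup>+ y \<in> {fst I..snd I}. g k y \<partial>lebesgue)"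
    by (subst nn_integral_suminf[symmetric]) (auto simp: ennreal_suminf_multc intro!: borel_measurable_times_ennreal)
  then have "ennreal (1 / (snd I - fst I)) * (\<integral>\<^sup>+ y \<in> {fst I..snd I}. (\<Sum>k. g k y) \<partial>lebesgue)
     = (\<Sum>k. ennreal (1 / (snd I - fst I)) * (\<integral>\<^sup>+ y \<in> {fst I..snd I}. g k y \<partial>lebesgue))"
    by simp
  also have "\<dots> \<le> (\<Sum>k. Me (g k) x)"
    using I by (intro suminf_le) (auto intro!: Me_avg_le)
  finally show "ennreal (1 / (snd I - fst I)) * (\<integral>\<^sup>+ y \<in> {fst I..snd I}. (\<Sum>k. g k y) \<partial>lebesgue)
     \<le> (\<Sum>k. Me (g k) x)" .
qed

lemma Me_cmult:
  assumes [measurable]: "g \<in> borel_measurable lebesgue"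
  shows "Me (\<lambda>y. c * g y) x = c * Me g x"
proof -
  have "\<And>A. A \<in> sets lebesgue \<Longrightarrow> (\<integral>\<^sup>+ y \<in> A. c * g y \<partial>lebesgue) = c * (\<integral>\<^sup>+ y \<in> A. g y \<partial>lebesgue)"
    by (simp add: mult.assoc nn_integral_cmult)
  then show ?thesis
    unfolding Me_def SUP_mult_left_ennreal
    by (intro SUP_cong refl) (auto simp: mult.left_commute)
qed


lemma open_sets_lebesgue: "open (S::real set) \<Longrightarrow> S \<in> sets lebesgue"
  by auto

lemma Me_open: "open {x. t < Me g x}"
proof (rule openI)
  fix x0 assume "x0 \<in> {x. t < Me g x}"
  then have "t < Me g x0" by simp
  then obtain I where I: "I \<in> {(a, b). a < b \<and> a \<le> x0 \<and> x0 \<le> b}"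
    and tI: "t < ennreal (1 / (snd I - fst I)) * (\<integral>\<^sup>+ y \<in> {fst I..snd I}. g y \<partial>lebesgue)"
    unfolding Me_def less_SUP_iff by blast
  obtain a b where ab: "I = (a, b)" by (cases I)
  with I have ab1: "a < b" "a \<le> x0" "x0 \<le> b" by auto
  define A where "A = (\<integral>\<^sup>+ y \<in> {a..b}. g y \<partial>lebesgue)"
  from tI have tA: "t < ennreal (1 / (b - a)) * A" by (simp add: ab A_def)
  have "\<exists>d>0. t < ennreal (1 / (b - a + 2 * d)) * A"
  proof (cases "A = top")
    case True
    have "t < top" using tA top.extremum_strict[of t] order.strict_trans2 top_greatest by metis
    then show ?thesis using True ab1 by (intro exI[of _ 1]) (auto simp: ennreal_mult_top)
  next
    case False
    then obtain r where r: "A = ennreal r" "0 \<le> r" by (cases A) auto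
    have lim: "((\<lambda>d. ennreal (1 / (b - a + 2 * d)) * A) \<longlongrightarrow> ennreal (1 / (b - a + 2 * 0)) * A) (at_right 0)"
      using ab1
      by (intro tendsto_intros tendsto_ennrealI tendsto_divide) (auto intro!: tendsto_intros)
    have "eventually (\<lambda>d. t < ennreal (1 / (b - a + 2 * d)) * A) (at_right 0)"
      using order_tendstoD(1)[OF lim] tA by simp
    then obtain d0 where d0: "d0 > 0" "\<And>d. d > 0 \<Longrightarrow> d < d0 \<Longrightarrow> t < ennreal (1 / (b - a + 2 * d)) * A"
      unfolding eventually_at_right_field by auto
    show ?thesis using d0(1) d0(2)[of "d0/2"] by (intro exI[of _ "d0/2"]) auto
  qed
  then obtain d where d: "d > 0" "t < ennreal (1 / (b - a + 2 * d)) * A" by blast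
  show "\<exists>e>0. ball x0 e \<subseteq> {x. t < Me g x}"
  proof (intro exI[of _ d] conjI subsetI)
    fix y assume "y \<in> ball x0 d"
    then have y: "a - d \<le> y" "y \<le> b + d" using ab1 by (auto simp: dist_real_def)
    have "A \<le> (\<integral>\<^sup>+ z \<in> {a-d..b+d}. g z \<partial>lebesgue)"
      unfolding A_def using d(1)
      by (intro nn_integral_mono) (auto simp: indicator_def intro!: mult_left_mono)
    then have "ennreal (1 / (b - a + 2 * d)) * A \<le> ennreal (1 / ((b + d) - (a - d))) * (\<integral>\<^sup>+ z \<in> {a-d..b+d}. g z \<partial>lebesgue)"
    proof -
      have "b + d - (a - d) = b - a + 2 * d" by simp
      then show ?thesis using \<open>A \<le> _\<close> by (metis mult_left_mono zero_le)
    qed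
    also have "\<dots> \<le> Me g y" using y ab1 d(1) by (intro Me_avg_le) auto
    finally show "y \<in> {x. t < Me g x}" using d(2) by simp
  qed (use d in auto)
qed

lemma Me_meas[measurable]: "Me g \<in> borel_measurable lebesgue"
  by (rule borel_measurableI_greater) (use Me_open open_sets_lebesgue in auto)


lemma ennsqrt_top[simp]: "ennsqrt top = top"
  by (simp add: ennsqrt_def)

lemma ennsqrt_ennreal: "0 \<le> r \<Longrightarrow> ennsqrt (ennreal r) = ennreal (sqrt r)"
  by (simp add: ennsqrt_def)

lemma ennsqrt_0[simp]: "ennsqrt 0 = 0"
  by (simp add: ennsqrt_def)

lemma ennsqrt_sq: "x < top \<Longrightarrow> ennsqrt x ^ 2 = x"
  by (cases x) (auto simp: ennsqrt_def ennreal_power)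

lemma ennsqrt_mult_self: "ennsqrt x * ennsqrt x = x"
proof (cases "x = top")
  case True then show ?thesis by simp
next
  case False then show ?thesis using ennsqrt_sq[of x] by (simp add: power2_eq_square top.not_eq_extremum)
qed

lemma ennsqrt_mono: "x \<le> y \<Longrightarrow> ennsqrt x \<le> ennsqrt y"
  by (cases x; cases y) (auto simp: ennsqrt_def top_unique)

lemma ennsqrt_of_sq: "ennsqrt (x ^ 2) = x"
proof (cases x)
  case (real r) then show ?thesis by (simp add: ennreal_power ennsqrt_ennreal)
qed (simp add: ennsqrt_def)

lemma ennsqrt_mult: "ennsqrt (x * y) = ennsqrt x * ennsqrt y"
proof (cases "x = 0 \<or> y = 0")
  case True then show ?thesis by auto
next
  case False
  show ?thesis
  proof (cases "x = top \<or> y = top")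
    case True
    then have nt: "x * y = top" using False by (auto simp: ennreal_mult_top ennreal_top_mult)
    have "ennsqrt x = top \<or> ennsqrt y = top" using True by auto
    moreover have "ennsqrt x \<noteq> 0" "ennsqrt y \<noteq> 0"
      using False ennsqrt_mult_self[of x] ennsqrt_mult_self[of y] by auto
    ultimately show ?thesis using nt by (auto simp: ennreal_mult_top ennreal_top_mult)
  next
    case F2: False
    then obtain r s where rs: "x = ennreal r" "y = ennreal s" "0 \<le> r" "0 \<le> s"
      by (cases x; cases y) auto
    then show ?thesis by (simp add: ennsqrt_ennreal ennreal_mult[symmetric] real_sqrt_mult)
  qed
qed

lemma ennsqrt_le_of_sq: assumes "x ^ 2 \<le> y" shows "x \<le> ennsqrt y"
proof -
  have "ennsqrt (x ^ 2) \<le> ennsqrt y" by (rule ennsqrt_mono[OF assms])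
  then show ?thesis by (simp add: ennsqrt_of_sq)
qed

lemma ennsqrt_le_iff_sq: "ennsqrt x \<le> y \<longleftrightarrow> x \<le> y ^ 2"
proof
  assume "ennsqrt x \<le> y"
  then have "ennsqrt x ^ 2 \<le> y ^ 2" by (intro power_mono) auto
  then show "x \<le> y ^ 2" by (metis ennsqrt_mult_self power2_eq_square)
next
  assume "x \<le> y ^ 2"
  then show "ennsqrt x \<le> y" using ennsqrt_mono ennsqrt_of_sq by metis
qed

lemma Inf_mult_bound:
  fixes S :: "ennreal set"
  assumes S: "Inf S < top" and L: "L < top" and H: "\<And>C. C \<in> S \<Longrightarrow> X \<le> C * L"
  shows "X \<le> Inf S * L"
proof (cases "L = 0")
  case True
  from S obtain C where "C \<in> S" by (metis Inf_less_iff)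
  with H True show ?thesis by auto
next
  case False
  from L False obtain l where l: "L = ennreal l" "0 < l" by (cases L) (auto simp: ennreal_eq_0_iff)
  show ?thesis
  proof (rule ennreal_le_epsilon)
    fix e :: real assume e: "0 < e"
    have "Inf S < Inf S + ennreal (e / l)"
      using S e l by (cases "Inf S") (auto simp: ennreal_plus[symmetric] ennreal_less_iff simp del: ennreal_plus)
    then obtain C where C: "C \<in> S" "C < Inf S + ennreal (e / l)" by (metis Inf_less_iff)
    have "X \<le> C * L" using H C by auto
    also have "\<dots> \<le> (Inf S + ennreal (e / l)) * L" using C by (intro mult_right_mono) auto
    also have "\<dots> = Inf S * L + ennreal e" using l e by (simp add: distrib_right ennreal_mult[symmetric] del: ennreal_mult)
    finally show "X \<le> Inf S * L + ennreal e" .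
  qed
qed


lemma M_bound:
  fixes w :: "real \<Rightarrow> real" and g :: "real \<Rightarrow> ennreal"
  assumes wm[measurable]: "w \<in> borel_measurable lebesgue"
    and wpos: "AE x in lebesgue. w x > 0"
    and MK: "M_L2_norm (\<lambda>x. inverse (w x)) = ennreal K"
    and gm[measurable]: "g \<in> borel_measurable lebesgue"
    and Q: "(\<integral>\<^sup>+ x. g x ^ 2 * ennreal (inverse (w x)) \<partial>lebesgue) < top"
  shows "(\<integral>\<^sup>+ x. Me g x ^ 2 * ennreal (inverse (w x)) \<partial>lebesgue)
           \<le> ennreal K ^ 2 * (\<integral>\<^sup>+ x. g x ^ 2 * ennreal (inverse (w x)) \<partial>lebesgue)"
proof -
  define Qg where "Qg = (\<integral>\<^sup>+ x. g x ^ 2 * ennreal (inverse (w x)) \<partial>lebesgue)"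
  have "AE x in lebesgue. g x ^ 2 * ennreal (inverse (w x)) \<noteq> top"
    using Q nn_integral_PInf_AE[of "\<lambda>x. g x ^ 2 * ennreal (inverse (w x))" lebesgue] by auto
  with wpos have gfin: "AE x in lebesgue. g x \<noteq> top"
    by eventually_elim (auto simp: ennreal_mult_eq_top_iff)
  define f where "f x = enn2real (g x)" for x
  have fm[measurable]: "f \<in> borel_measurable lebesgue" unfolding f_def by measurable
  have ae1: "AE x in lebesgue. ennreal ((f x)\<^sup>2 * inverse (w x)) = g x ^ 2 * ennreal (inverse (w x))"
    using gfin wpos
  proof eventually_elim
    case (elim x)
    then show ?case by (cases "g x") (auto simp: f_def ennreal_mult ennreal_power)
  qed
  have L2: "L2_norm (\<lambda>x. inverse (w x)) f = ennsqrt Qg"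
    unfolding L2_norm_def Qg_def by (simp add: nn_integral_cong_AE[OF ae1])
  have Mf: "maxf f = Me g"
    unfolding maxf_Me by (rule Me_cong_AE) (use gfin in \<open>eventually_elim, auto simp: f_def less_top\<close>)
  have Qfin: "Qg < top" using Q Qg_def by simp
  have L2fin: "L2_norm (\<lambda>x. inverse (w x)) f < top"
    using Qfin unfolding L2 by (cases Qg) (auto simp: ennsqrt_def)
  have "ennsqrt (\<integral>\<^sup>+ x. (maxf f x)\<^sup>2 * ennreal (inverse (w x)) \<partial>lebesgue)
        \<le> M_L2_norm (\<lambda>x. inverse (w x)) * L2_norm (\<lambda>x. inverse (w x)) f"
    unfolding M_L2_norm_def
    by (rule Inf_mult_bound) (use MK L2fin fm in \<open>auto simp: M_L2_norm_def\<close>)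
  then have "ennsqrt (\<integral>\<^sup>+ x. Me g x ^ 2 * ennreal (inverse (w x)) \<partial>lebesgue) \<le> ennreal K * ennsqrt Qg"
    using Mf L2 MK by simp
  then have "(\<integral>\<^sup>+ x. Me g x ^ 2 * ennreal (inverse (w x)) \<partial>lebesgue) \<le> (ennreal K * ennsqrt Qg) ^ 2"
    by (simp add: ennsqrt_le_iff_sq)
  also have "\<dots> = ennreal K ^ 2 * Qg" using Qfin by (simp add: power_mult_distrib ennsqrt_sq)
  finally show ?thesis unfolding Qg_def .
qed


lemma CS_weighted:
  fixes w f :: "real \<Rightarrow> real" and h :: "real \<Rightarrow> ennreal"
  assumes wm[measurable]: "w \<in> borel_measurable lebesgue"
    and w0: "\<And>x. 0 \<le> w x"
    and wpos: "AE x in lebesgue. w x > 0"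
    and fm[measurable]: "f \<in> borel_measurable lebesgue"
    and hm[measurable]: "h \<in> borel_measurable lebesgue"
  shows "(\<integral>\<^sup>+ x. ennreal \<bar>f x\<bar> * h x \<partial>lebesgue)
     \<le> L2_norm w f * ennsqrt (\<integral>\<^sup>+ x. h x ^ 2 * ennreal (inverse (w x)) \<partial>lebesgue)"
proof -
  define a where "a x = ennreal (\<bar>f x\<bar> * sqrt (w x))" for x
  define b where "b x = h x * ennreal (sqrt (inverse (w x)))" for x
  have [measurable]: "a \<in> borel_measurable lebesgue" "b \<in> borel_measurable lebesgue"
    unfolding a_def b_def by measurable
  have ab: "AE x in lebesgue. a x * b x = ennreal \<bar>f x\<bar> * h x"
    using wpos
  proof eventually_elim
    case (elim x)
    have "sqrt (w x) * sqrt (inverse (w x)) = 1" using elim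
      by (simp add: real_sqrt_mult[symmetric])
    then have "ennreal (sqrt (w x)) * ennreal (sqrt (inverse (w x))) = 1"
      by (metis ennreal_1 ennreal_mult' real_sqrt_ge_zero w0)
    then show ?case unfolding a_def b_def using elim
      by (simp add: ennreal_mult mult.assoc mult.left_commute mult.commute)
  qed
  have a2: "a x ^ 2 = ennreal ((f x)\<^sup>2 * w x)" for x
    unfolding a_def using w0[of x]
    by (simp add: ennreal_power power_mult_distrib)
  have b2: "b x ^ 2 = h x ^ 2 * ennreal (inverse (w x))" for x
    unfolding b_def using w0[of x]
    by (simp add: ennreal_power power_mult_distrib)
  have "(\<integral>\<^sup>+ x. a x * b x \<partial>lebesgue)\<^sup>2 \<le> (\<integral>\<^sup>+ x. a x ^ 2 \<partial>lebesgue) * (\<integral>\<^sup>+ x. b x ^ 2 \<partial>lebesgue)"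
    by (rule Cauchy_Schwarz_nn_integral) auto
  then have "(\<integral>\<^sup>+ x. a x * b x \<partial>lebesgue) \<le> ennsqrt ((\<integral>\<^sup>+ x. a x ^ 2 \<partial>lebesgue) * (\<integral>\<^sup>+ x. b x ^ 2 \<partial>lebesgue))"
    by (rule ennsqrt_le_of_sq)
  then show ?thesis
    unfolding ennsqrt_mult L2_norm_def a2 b2 by (simp add: nn_integral_cong_AE[OF ab])
qed


lemma ennreal_enn2real_le: "ennreal (enn2real r) \<le> r"
  by (simp add: ennreal_enn2real_if)

lemma suminf_Suc_le_ennreal: "(\<Sum>k. g (Suc k)) \<le> (\<Sum>k. g k :: ennreal)"
proof -
  have "(\<Sum>k. g k) = (\<Sum>j. g (j + 1)) + (\<Sum>j<1. g j)"
    by (rule suminf_offset) auto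
  then show ?thesis by (simp add: add_increasing2)
qed

lemma geom_half_ennreal: "(\<Sum>k. ennreal ((1/2)^k)) = 2"
proof -
  have "(\<lambda>k. (1/2::real)^k) sums (1 / (1 - 1/2))" by (rule geometric_sums) simp
  then have "(\<Sum>k. ennreal ((1/2)^k)) = ennreal (1 / (1 - 1/2))"
    by (intro suminf_ennreal_eq) auto
  then show ?thesis by simp
qed


lemma RdF:
  fixes w :: "real \<Rightarrow> real" and u :: "real \<Rightarrow> ennreal" and K :: real
  assumes wm[measurable]: "w \<in> borel_measurable lebesgue"
    and w0: "\<And>x. 0 \<le> w x"
    and wloc: "\<And>a b. set_integrable lebesgue {a..b} w"
    and wpos: "AE x in lebesgue. w x > 0"
    and K0: "0 \<le> K"
    and MK: "M_L2_norm (\<lambda>x. inverse (w x)) = ennreal K"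
    and um[measurable]: "u \<in> borel_measurable lebesgue"
    and Qu: "(\<integral>\<^sup>+ x. u x ^ 2 * ennreal (inverse (w x)) \<partial>lebesgue) < top"
  shows "\<exists>v. is_weight v \<and> A1_const v \<le> ennreal (2 * K) \<and> (AE x in lebesgue. u x \<le> ennreal (v x)) \<and>
     (\<forall>f. f \<in> borel_measurable lebesgue \<longrightarrow>
        L1_norm v f \<le> 2 * L2_norm w f * ennsqrt (\<integral>\<^sup>+ x. u x ^ 2 * ennreal (inverse (w x)) \<partial>lebesgue))"
proof -
  define Q where "Q h = (\<integral>\<^sup>+ x. h x ^ 2 * ennreal (inverse (w x)) \<partial>lebesgue)" for h
  define T where "T k = (Me ^^ k) u" for k
  have T0: "T 0 = u" and TS: "T (Suc k) = Me (T k)" for k by (simp_all add: T_def)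
  have Tm[measurable]: "T k \<in> borel_measurable lebesgue" for k
    by (cases k) (simp_all add: T0 TS)
  have QT: "Q (T k) \<le> ennreal K ^ (2 * k) * Q u" for k
  proof (induction k)
    case 0 then show ?case by (simp add: T0)
  next
    case (Suc k)
    have "ennreal K ^ (2 * k) < top" by (metis ennreal_power[OF K0] ennreal_less_top)
    then have "ennreal K ^ (2 * k) * Q u < top"
      using Qu unfolding Q_def[of u] by (simp add: ennreal_mult_less_top)
    then have fin: "Q (T k) < top"
      using Suc by (rule le_less_trans[rotated])
    have "Q (T (Suc k)) \<le> ennreal K ^ 2 * Q (T k)"
      unfolding TS Q_def by (rule M_bound[OF wm wpos MK Tm]) (use fin in \<open>simp add: Q_def\<close>)
    also have "\<dots> \<le> ennreal K ^ 2 * (ennreal K ^ (2 * k) * Q u)"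
      by (intro mult_left_mono Suc) auto
    also have "\<dots> = ennreal K ^ (2 * Suc k) * Q u"
      by (simp add: power2_eq_square mult.assoc)
    finally show ?case .
  qed
  define c where "c = (if K > 0 then 2 * K else 1)"
  have c0: "c > 0" using K0 by (auto simp: c_def)
  define co where "co k = ennreal ((1 / c) ^ k)" for k
  define R where "R x = (\<Sum>k. co k * T k x)" for x
  have Rm[measurable]: "R \<in> borel_measurable lebesgue"
    unfolding R_def by measurable
  have key: "(\<integral>\<^sup>+ x. ennreal \<bar>f x\<bar> * R x \<partial>lebesgue) \<le> 2 * L2_norm w f * ennsqrt (Q u)"
    if fm[measurable]: "f \<in> borel_measurable lebesgue" for f
  proof -
    have "(\<integral>\<^sup>+ x. ennreal \<bar>f x\<bar> * R x \<partial>lebesgue) = (\<integral>\<^sup>+ x. (\<Sum>k. co k * (ennreal \<bar>f x\<bar> * T k x)) \<partial>lebesgue)"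
      unfolding R_def by (simp add: ennreal_suminf_cmult[symmetric] mult.left_commute del: ennreal_suminf_cmult)
    also have "\<dots> = (\<Sum>k. co k * (\<integral>\<^sup>+ x. ennreal \<bar>f x\<bar> * T k x \<partial>lebesgue))"
      by (subst nn_integral_suminf) (auto simp: nn_integral_cmult)
    also have "\<dots> \<le> (\<Sum>k. (L2_norm w f * ennsqrt (Q u)) * ennreal ((1/2) ^ k))"
    proof (intro suminf_le summableI)
      fix k
      have "(\<integral>\<^sup>+ x. ennreal \<bar>f x\<bar> * T k x \<partial>lebesgue) \<le> L2_norm w f * ennsqrt (Q (T k))"
        unfolding Q_def by (rule CS_weighted[OF wm w0 wpos fm Tm])
      also have "\<dots> \<le> L2_norm w f * ennsqrt (ennreal K ^ (2 * k) * Q u)"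
        by (rule mult_left_mono[OF ennsqrt_mono[OF QT[of k]]]) simp
      also have "\<dots> = L2_norm w f * (ennreal K ^ k * ennsqrt (Q u))"
      proof -
        have "ennreal K ^ (2 * k) = (ennreal K ^ k) ^ 2"
          by (metis power_mult mult.commute)
        then show ?thesis by (simp only: ennsqrt_mult ennsqrt_of_sq)
      qed
      finally have "co k * (\<integral>\<^sup>+ x. ennreal \<bar>f x\<bar> * T k x \<partial>lebesgue) \<le> co k * (L2_norm w f * (ennreal K ^ k * ennsqrt (Q u)))"
        by (intro mult_left_mono) auto
      also have "\<dots> = (L2_norm w f * ennsqrt (Q u)) * (co k * ennreal K ^ k)"
        by (simp add: ac_simps)
      also have "co k * ennreal K ^ k \<le> ennreal ((1/2) ^ k)"
      proof -
        have "co k * ennreal K ^ k = ennreal ((K / c) ^ k)"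
          unfolding co_def using K0 c0
          by (simp add: ennreal_power ennreal_mult[symmetric] power_mult_distrib[symmetric] del: ennreal_mult)
        also have "(K / c) ^ k \<le> (1/2) ^ k"
          using K0 c0 by (intro power_mono) (auto simp: c_def)
        finally show ?thesis by (simp add: ennreal_leI)
      qed
      then have "(L2_norm w f * ennsqrt (Q u)) * (co k * ennreal K ^ k) \<le> (L2_norm w f * ennsqrt (Q u)) * ennreal ((1/2) ^ k)"
        by (intro mult_left_mono) auto
      finally show "co k * (\<integral>\<^sup>+ x. ennreal \<bar>f x\<bar> * T k x \<partial>lebesgue) \<le> (L2_norm w f * ennsqrt (Q u)) * ennreal ((1/2) ^ k)" .
    qed
    also have "\<dots> = 2 * L2_norm w f * ennsqrt (Q u)"
      by (simp add: geom_half_ennreal ac_simps)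
    finally show ?thesis .
  qed
  have loc: "(\<integral>\<^sup>+ x. ennreal \<bar>indicator {a..b} x\<bar> * R x \<partial>lebesgue) < top" for a b :: real
  proof -
    have "integrable lebesgue (\<lambda>x. indicator {a..b} x *\<^sub>R w x)" using wloc[of a b] by (simp add: set_integrable_def)
    then have "(\<integral>\<^sup>+ x. ennreal (norm (indicator {a..b} x *\<^sub>R w x)) \<partial>lebesgue) < top"
      by (simp add: integrable_iff_bounded)
    moreover have "ennreal (norm (indicator {a..b} x *\<^sub>R w x)) = ennreal ((indicator {a..b} x)\<^sup>2 * w x)" for x
      using w0[of x] by (auto simp: indicator_def)
    ultimately have "L2_norm w (indicator {a..b}) < top"
      unfolding L2_norm_def by (auto simp: ennsqrt_def)
    moreover have "ennsqrt (Q u) < top" using Qu unfolding Q_def by (auto simp: ennsqrt_def)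
    ultimately have "2 * L2_norm w (indicator {a..b}) * ennsqrt (Q u) < top"
      by (simp add: ennreal_mult_less_top)
    with key[of "indicator {a..b}"] show ?thesis by (simp add: le_less_trans)
  qed
  have Rfin: "AE x in lebesgue. R x \<noteq> top"
  proof -
    have "AE x in lebesgue. \<forall>n::nat. ennreal \<bar>indicator {-real n..real n} x\<bar> * R x \<noteq> top"
    proof (subst AE_all_countable, intro allI)
      fix n :: nat
      show "AE x in lebesgue. ennreal \<bar>indicator {-real n..real n} x\<bar> * R x \<noteq> top"
        using loc[of "-real n" "real n"]
          nn_integral_PInf_AE[of "\<lambda>x. ennreal \<bar>indicator {-real n..real n} x\<bar> * R x" lebesgue]
        by auto
    qed
    then show ?thesis
    proof eventually_elim
      case (elim x)
      obtain n :: nat where "\<bar>x\<bar> \<le> real n" using real_arch_simple by blast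
      then have "x \<in> {-real n..real n}" by auto
      with elim[rule_format, of n] show ?case by simp
    qed
  qed
  define v where "v x = enn2real (R x)" for x
  have vm[measurable]: "v \<in> borel_measurable lebesgue" unfolding v_def by measurable
  have vR: "AE x in lebesgue. ennreal (v x) = R x"
    using Rfin by eventually_elim (simp add: v_def ennreal_enn2real_if)
  have isw: "is_weight v"
    unfolding is_weight_def
  proof (intro conjI allI vm)
    fix x show "0 \<le> v x" by (simp add: v_def)
  next
    fix a b :: real
    have "(\<integral>\<^sup>+ x. ennreal (norm (indicator {a..b} x *\<^sub>R v x)) \<partial>lebesgue)
       \<le> (\<integral>\<^sup>+ x. ennreal \<bar>indicator {a..b} x\<bar> * R x \<partial>lebesgue)"
      by (intro nn_integral_mono) (auto simp: v_def indicator_def ennreal_enn2real_le)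
    then show "set_integrable lebesgue {a..b} v"
      unfolding set_integrable_def using loc[of a b]
      by (subst integrable_iff_bounded) (auto intro: le_less_trans)
  qed
  have MeR: "Me R x \<le> (\<Sum>k. co k * T (Suc k) x)" for x
  proof -
    have "Me R x \<le> (\<Sum>k. Me (\<lambda>y. co k * T k y) x)"
      unfolding R_def[abs_def] by (rule Me_suminf) auto
    also have "\<dots> = (\<Sum>k. co k * T (Suc k) x)"
      by (simp add: Me_cmult TS)
    finally show ?thesis .
  qed
  have A1ae: "AE x in lebesgue. Me R x \<le> ennreal (2 * K) * R x"
  proof (cases "K > 0")
    case True
    have "co k = ennreal (2 * K) * co (Suc k)" for k
    proof -
      have "(1 / c) ^ k = c * (1 / c) ^ Suc k" using c0 by simp
      then have "co k = ennreal (c * (1 / c) ^ Suc k)" unfolding co_def by simp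
      also have "\<dots> = ennreal c * co (Suc k)" unfolding co_def
        using c0 by (intro ennreal_mult) auto
      finally show ?thesis using True by (simp add: c_def)
    qed
    note eq = this
    have "(\<Sum>k. co k * T (Suc k) x) = (\<Sum>k. ennreal (2 * K) * (co (Suc k) * T (Suc k) x))" for x
      by (intro suminf_cong) (metis eq mult.assoc)
    then have "(\<Sum>k. co k * T (Suc k) x) = ennreal (2 * K) * (\<Sum>k. co (Suc k) * T (Suc k) x)" for x
      by (simp only: ennreal_suminf_cmult)
    also have "\<dots> x \<le> ennreal (2 * K) * R x" for x
      unfolding R_def by (intro mult_left_mono suminf_Suc_le_ennreal[of "\<lambda>k. co k * T k x"]) auto
    finally show ?thesis using MeR by (auto intro: order_trans)
  next
    case False
    then have K: "K = 0" using K0 by simp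
    have "AE x in lebesgue. \<forall>k. T (Suc k) x = 0"
    proof (subst AE_all_countable, intro allI)
      fix k
      have "Q (T (Suc k)) = 0" using QT[of "Suc k"] K by (simp add: power_0_left)
      then have "AE x in lebesgue. T (Suc k) x ^ 2 * ennreal (inverse (w x)) = 0"
        unfolding Q_def by (subst (asm) nn_integral_0_iff_AE) auto
      then show "AE x in lebesgue. T (Suc k) x = 0"
        using wpos by eventually_elim auto
    qed
    then show ?thesis
    proof eventually_elim
      case (elim x)
      then show ?case using MeR[of x] by simp
    qed
  qed
  have A1: "A1_const v \<le> ennreal (2 * K)"
  proof -
    have "maxf v = Me R"
      unfolding maxf_Me by (rule Me_cong_AE) (use vR in \<open>eventually_elim, simp add: v_def\<close>)
    note mv = this
    have "AE x in lebesgue. maxf v x \<le> ennreal (2 * K) * ennreal (v x)"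
      using A1ae vR by eventually_elim (simp add: mv)
    then show ?thesis unfolding A1_const_def by (intro Inf_lower) simp
  qed
  have uv: "AE x in lebesgue. u x \<le> ennreal (v x)"
    using vR
  proof eventually_elim
    case (elim x)
    have "co 0 * T 0 x \<le> R x"
      unfolding R_def using sum_le_suminf[OF summableI, of "{0}" "\<lambda>k. co k * T k x"] by simp
    then show ?case using elim by (simp add: co_def T0)
  qed
  have L1: "L1_norm v f \<le> 2 * L2_norm w f * ennsqrt (Q u)" if "f \<in> borel_measurable lebesgue" for f
  proof -
    have "L1_norm v f \<le> (\<integral>\<^sup>+ x. ennreal \<bar>f x\<bar> * R x \<partial>lebesgue)"
      unfolding L1_norm_def
      by (intro nn_integral_mono) (auto simp: v_def ennreal_mult intro!: mult_left_mono ennreal_enn2real_le)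
    also have "\<dots> \<le> 2 * L2_norm w f * ennsqrt (Q u)" by (rule key[OF that])
    finally show ?thesis .
  qed
  show ?thesis using isw A1 uv L1 unfolding Q_def by blast
qed


lemma wmeas_Icc_fin:
  assumes w0: "\<And>x. 0 \<le> w x" and wloc: "set_integrable lebesgue {a..b} w"
  shows "wmeas w {a..b} < top"
proof -
  have "integrable lebesgue (\<lambda>x. indicator {a..b} x *\<^sub>R w x)" using wloc by (simp add: set_integrable_def)
  then have "(\<integral>\<^sup>+ x. ennreal (norm (indicator {a..b} x *\<^sub>R w x)) \<partial>lebesgue) < top"
    by (simp add: integrable_iff_bounded)
  moreover have "ennreal (norm (indicator {a..b} x *\<^sub>R w x)) = ennreal (w x) * indicator {a..b} x" for x
    using w0[of x] by (auto simp: indicator_def)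
  ultimately show ?thesis unfolding wmeas_def by simp
qed

lemma core:
  fixes w f :: "real \<Rightarrow> real" and K \<alpha> b :: real and G E :: "real set"
  assumes wm[measurable]: "w \<in> borel_measurable lebesgue"
    and w0: "\<And>x. 0 \<le> w x"
    and wloc: "\<And>a b. set_integrable lebesgue {a..b} w"
    and wpos: "AE x in lebesgue. w x > 0"
    and K0: "0 \<le> K"
    and MK: "M_L2_norm (\<lambda>x. inverse (w x)) = ennreal K"
    and fm[measurable]: "f \<in> borel_measurable lebesgue"
    and Nf: "L2_norm w f < top"
    and \<alpha>: "0 < \<alpha>"
    and E: "E = {x. \<bar>hilbert f x\<bar> > \<alpha>}"
    and G[measurable]: "G \<in> sets lebesgue" and GE: "G \<subseteq> E"
    and Gfin: "wmeas w G < top"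
    and phifin: "phi_H (2 * K) < top"
    and b: "2 * phi_H (2 * K) * L2_norm w f = ennreal b" "0 \<le> b"
  shows "wmeas w G \<le> ennreal ((b / \<alpha>) ^ 2)"
proof -
  define u where "u x = ennreal (w x) * indicator G x" for x
  have um[measurable]: "u \<in> borel_measurable lebesgue" unfolding u_def by measurable
  have "u x ^ 2 * ennreal (inverse (w x)) = ennreal (w x) * indicator G x" for x
  proof -
    have "(w x)\<^sup>2 * inverse (w x) = w x"
      by (cases "w x = 0") (simp_all add: power2_eq_square)
    then have "(ennreal (w x))\<^sup>2 * ennreal (inverse (w x)) = ennreal (w x)"
      using w0[of x] by (metis ennreal_mult'' ennreal_power inverse_nonnegative_iff_nonnegative)
    then show ?thesis unfolding u_def
      by (auto simp: indicator_def)
  qed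
  then have QG: "(\<integral>\<^sup>+ x. u x ^ 2 * ennreal (inverse (w x)) \<partial>lebesgue) = wmeas w G"
    unfolding wmeas_def by simp
  obtain v where v: "is_weight v" "A1_const v \<le> ennreal (2 * K)"
      "AE x in lebesgue. u x \<le> ennreal (v x)"
      "\<And>f. f \<in> borel_measurable lebesgue \<Longrightarrow> L1_norm v f \<le> 2 * L2_norm w f * ennsqrt (wmeas w G)"
    using RdF[OF wm w0 wloc wpos K0 MK um] Gfin unfolding QG by blast
  define Q where "Q = wmeas w G"
  define N where "N = L2_norm w f"
  define \<phi> where "\<phi> = phi_H (2 * K)"
  have Hv: "H_weak11_norm v \<le> \<phi>"
    unfolding \<phi>_def phi_H_def by (rule SUP_upper) (use v in auto)
  have L: "L1_norm v f \<le> 2 * N * ennsqrt Q" using v(4)[OF fm] by (simp add: N_def Q_def)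
  have Nfin: "N < top" using Nf by (simp add: N_def)
  have Qfin: "Q < top" using Gfin by (simp add: Q_def)
  have Lfin: "L1_norm v f < top"
  proof -
    have "ennsqrt Q < top" using Qfin by (cases Q) (auto simp: ennsqrt_def)
    then have "2 * N * ennsqrt Q < top" using Nfin by (simp add: ennreal_mult_less_top)
    then show ?thesis using L by (rule le_less_trans[rotated])
  qed
  have weak: "weak_L1_norm v (hilbert f) \<le> H_weak11_norm v * L1_norm v f"
    unfolding H_weak11_norm_def
  proof (rule Inf_mult_bound)
    show "Inf {C. \<forall>f. f \<in> borel_measurable lebesgue \<and> L1_norm v f < top \<longrightarrow>
       weak_L1_norm v (hilbert f) \<le> C * L1_norm v f} < top"
      using Hv phifin unfolding H_weak11_norm_def \<phi>_def by (rule le_less_trans)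
  qed (use Lfin fm in auto)
  have "ennreal \<alpha> * wmeas v E \<le> weak_L1_norm v (hilbert f)"
    unfolding weak_L1_norm_def E using \<alpha> by (intro SUP_upper2[of \<alpha>]) auto
  moreover have "Q \<le> wmeas v E"
    unfolding wmeas_def Q_def
  proof (rule nn_integral_mono_AE)
    show "AE x in lebesgue. ennreal (w x) * indicator G x \<le> ennreal (v x) * indicator E x"
      using v(3)
    proof eventually_elim
      case (elim x)
      then show ?case using GE unfolding u_def by (auto simp: indicator_def)
    qed
  qed
  ultimately have "ennreal \<alpha> * Q \<le> H_weak11_norm v * L1_norm v f"
    using weak by (meson mult_left_mono order_trans zero_le)
  also have "\<dots> \<le> \<phi> * (2 * N * ennsqrt Q)"
    using Hv L by (intro mult_mono) auto
  also have "\<dots> = ennreal b * ennsqrt Q"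
    using b(1) by (simp add: \<phi>_def N_def ac_simps)
  finally have ineq: "ennreal \<alpha> * Q \<le> ennreal b * ennsqrt Q" .
  obtain q where q: "Q = ennreal q" "0 \<le> q" using Qfin by (cases Q) auto
  have "ennreal (\<alpha> * q) \<le> ennreal (b * sqrt q)"
    using ineq q \<alpha> b(2) by (simp add: ennsqrt_ennreal ennreal_mult)
  then have r: "\<alpha> * q \<le> b * sqrt q"
    using b(2) q(2) by (subst (asm) ennreal_le_iff) auto
  have "q \<le> (b / \<alpha>) ^ 2"
  proof (cases "sqrt q = 0")
    case True then show ?thesis by simp
  next
    case False
    then have sp: "sqrt q > 0" using q(2) by simp
    have "q = sqrt q * sqrt q" using q(2) by simp
    with r have "\<alpha> * sqrt q * sqrt q \<le> b * sqrt q" by (simp add: mult.assoc)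
    then have "\<alpha> * sqrt q \<le> b" using sp by simp
    then have "sqrt q \<le> b / \<alpha>" using \<alpha> by (simp add: field_simps)
    then have "(sqrt q) ^ 2 \<le> (b / \<alpha>) ^ 2" using q(2) by (intro power_mono) auto
    then show ?thesis using q(2) by simp
  qed
  then show ?thesis using q by (simp add: Q_def[symmetric] ennreal_leI)
qed


lemma ext_meas:
  assumes wm[measurable]: "w \<in> borel_measurable lebesgue"
    and w0: "\<And>x. 0 \<le> w x"
    and wloc: "\<And>a b. set_integrable lebesgue {a..b} w"
    and G[measurable]: "G \<in> sets lebesgue"
    and H: "\<And>G'. G' \<in> sets lebesgue \<Longrightarrow> G' \<subseteq> G \<Longrightarrow> wmeas w G' < top \<Longrightarrow> wmeas w G' \<le> C"
  shows "wmeas w G \<le> C"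
proof -
  define F where "F n x = ennreal (w x) * indicator (G \<inter> {- real n..real n}) x" for n x
  have Fm[measurable]: "F n \<in> borel_measurable lebesgue" for n unfolding F_def
    by (intro borel_measurable_times_ennreal borel_measurable_indicator sets.Int) auto
  have inc: "incseq F"
    unfolding incseq_def F_def
    by (auto intro!: le_funI mult_left_mono simp: indicator_def)
  have sup: "(SUP n. F n x) = ennreal (w x) * indicator G x" for x
  proof (rule antisym)
    show "(SUP n. F n x) \<le> ennreal (w x) * indicator G x"
      by (rule SUP_least) (auto simp: F_def indicator_def)
    obtain n :: nat where "\<bar>x\<bar> \<le> real n" using real_arch_simple by blast
    then have "F n x = ennreal (w x) * indicator G x" by (auto simp: F_def indicator_def)
    then show "ennreal (w x) * indicator G x \<le> (SUP n. F n x)" by (metis SUP_upper UNIV_I)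
  qed
  have "wmeas w G = (SUP n. integral\<^sup>N lebesgue (F n))"
    unfolding wmeas_def
    by (subst nn_integral_monotone_convergence_SUP[OF inc Fm, symmetric]) (simp add: sup)
  also have "\<dots> \<le> C"
  proof (rule SUP_least)
    fix n
    have eq: "integral\<^sup>N lebesgue (F n) = wmeas w (G \<inter> {- real n..real n})"
      unfolding wmeas_def F_def by simp
    have "wmeas w (G \<inter> {- real n..real n}) \<le> wmeas w {- real n..real n}"
      unfolding wmeas_def by (intro nn_integral_mono) (auto simp: indicator_def)
    also have "\<dots> < top" by (rule wmeas_Icc_fin[OF w0 wloc])
    finally show "integral\<^sup>N lebesgue (F n) \<le> C"
      unfolding eq by (intro H) auto
  qed
  finally show ?thesis .
qed

lemma ext_any:
  assumes H: "\<And>G. G \<in> sets lebesgue \<Longrightarrow> G \<subseteq> E \<Longrightarrow> wmeas w G \<le> C"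
  shows "wmeas w E \<le> C"
  unfolding wmeas_def nn_integral_def
proof (rule SUP_least, clarify)
  fix g assume g: "simple_function lebesgue g" "g \<le> (\<lambda>x. ennreal (w x) * indicator E x)"
  have gm[measurable]: "g \<in> borel_measurable lebesgue" by (rule borel_measurable_simple_function[OF g(1)])
  define G where "G = {x. g x \<noteq> 0}"
  have "g -` (- {0}) \<inter> space lebesgue \<in> sets lebesgue" by (rule measurable_sets[OF gm]) auto
  then have Gm: "G \<in> sets lebesgue" unfolding G_def by (simp add: vimage_def Collect_neg_eq)
  have GE: "G \<subseteq> E"
  proof
    fix x assume "x \<in> G"
    then have "g x \<noteq> 0" by (simp add: G_def)
    moreover have "g x \<le> ennreal (w x) * indicator E x" using g(2) by (simp add: le_fun_def)
    ultimately show "x \<in> E" by (cases "x \<in> E") auto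
  qed
  have "integral\<^sup>S lebesgue g = integral\<^sup>N lebesgue g"
    by (rule nn_integral_eq_simple_integral[symmetric, OF g(1)])
  also have "\<dots> \<le> wmeas w G"
    unfolding wmeas_def
  proof (rule nn_integral_mono)
    fix x
    have "g x \<le> ennreal (w x) * indicator E x" using g(2) by (simp add: le_fun_def)
    then show "g x \<le> ennreal (w x) * indicator G x"
      using GE by (cases "x \<in> G") (auto simp: G_def indicator_def)
  qed
  also have "\<dots> \<le> C" by (rule H[OF Gm GE])
  finally show "integral\<^sup>S lebesgue g \<le> C" .
qed


lemma hilbert_zero:
  assumes "AE y in lebesgue. f y = 0"
  shows "hilbert f x = 0"
proof -
  have "(\<integral> y. indicator {y. e < \<bar>x - y\<bar>} y * (f y / (x - y)) \<partial>lebesgue) = 0" for e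
    by (rule integral_eq_zero_AE) (use assms in eventually_elim, auto)
  then show ?thesis unfolding hilbert_def by (simp add: tendsto_Lim)
qed

theorem mainTheorem2:
  fixes w :: "real \<Rightarrow> real" and K :: real and f :: "real \<Rightarrow> real"
  assumes "is_weight w"
    and "AE x in lebesgue. w x > 0"
    and "M_L2_norm (\<lambda>x. inverse (w x)) = ennreal K"
    and "f \<in> borel_measurable lebesgue"
    and "L2_norm w f < top"
  shows "weak_L2_norm w (hilbert f) \<le> 2 * phi_H (2 * K) * L2_norm w f"
proof -
  note wpos = assms(2)
  note fm[measurable] = assms(4)
  note Nf = assms(5)
  have wm[measurable]: "w \<in> borel_measurable lebesgue" and w0: "\<And>x. 0 \<le> w x"
    and wloc: "\<And>a b. set_integrable lebesgue {a..b} w"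
    using assms(1) by (auto simp: is_weight_def)
  define K0 where "K0 = max 0 K"
  have K0: "0 \<le> K0" by (simp add: K0_def)
  have MK: "M_L2_norm (\<lambda>x. inverse (w x)) = ennreal K0"
    using assms(3) by (simp add: K0_def ennreal_max_0)
  have phiK: "phi_H (2 * K0) = phi_H (2 * K)"
  proof -
    have "ennreal (2 * K0) = ennreal (2 * K)"
      by (metis K0_def ennreal_max_0 max_mult_distrib_left mult_zero_right zero_le_numeral)
    then show ?thesis unfolding phi_H_def by simp
  qed
  show ?thesis
  proof (cases "L2_norm w f = 0")
    case True
    then have "(\<integral>\<^sup>+ x. ennreal ((f x)\<^sup>2 * w x) \<partial>lebesgue) = 0"
      unfolding L2_norm_def by (metis ennsqrt_mult_self mult_zero_left)
    then have "AE x in lebesgue. ennreal ((f x)\<^sup>2 * w x) = 0"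
      by (subst (asm) nn_integral_0_iff_AE) auto
    then have "AE x in lebesgue. f x = 0"
      using wpos by eventually_elim (auto simp: ennreal_eq_0_iff mult_le_0_iff)
    then have "hilbert f = (\<lambda>x. 0)" by (intro ext hilbert_zero)
    then have "weak_L2_norm w (hilbert f) = 0"
      unfolding weak_L2_norm_def wmeas_def by (simp add: not_less_iff_gr_or_eq)
    then show ?thesis by simp
  next
    case Nnz: False
    show ?thesis
    proof (cases "phi_H (2 * K) = top")
      case True
      then have "2 * phi_H (2 * K) * L2_norm w f = top" using Nnz
        by (simp add: ennreal_mult_eq_top_iff)
      then show ?thesis by simp
    next
      case False
      then have phifin: "phi_H (2 * K0) < top" using phiK by (simp add: top.not_eq_extremum)
      have "2 * phi_H (2 * K0) * L2_norm w f < top"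
        using phifin Nf by (simp add: ennreal_mult_less_top)
      then obtain b where b: "2 * phi_H (2 * K0) * L2_norm w f = ennreal b" "0 \<le> b"
        by (cases "2 * phi_H (2 * K0) * L2_norm w f") auto
      show ?thesis
        unfolding weak_L2_norm_def phiK[symmetric] b(1)
      proof (rule SUP_least)
        fix \<alpha> :: real assume "\<alpha> \<in> {0<..}"
        then have \<alpha>: "0 < \<alpha>" by simp
        define E where "E = {x. \<bar>hilbert f x\<bar> > \<alpha>}"
        have "wmeas w E \<le> ennreal ((b / \<alpha>) ^ 2)"
        proof (rule ext_any)
          fix G assume G: "G \<in> sets lebesgue" "G \<subseteq> E"
          show "wmeas w G \<le> ennreal ((b / \<alpha>) ^ 2)"
          proof (rule ext_meas[OF wm w0 wloc G(1)])
            fix G' assume G': "G' \<in> sets lebesgue" "G' \<subseteq> G" "wmeas w G' < top"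
            show "wmeas w G' \<le> ennreal ((b / \<alpha>) ^ 2)"
              by (rule core[OF wm w0 wloc wpos K0 MK fm Nf \<alpha> E_def G'(1) _ G'(3) phifin b])
                 (use G G' in auto)
          qed
        qed
        then have "ennsqrt (wmeas w E) \<le> ennsqrt (ennreal ((b / \<alpha>) ^ 2))" by (rule ennsqrt_mono)
        also have "\<dots> = ennreal (b / \<alpha>)"
          using b(2) \<alpha> by (simp add: ennsqrt_ennreal)
        finally have "ennreal \<alpha> * ennsqrt (wmeas w E) \<le> ennreal \<alpha> * ennreal (b / \<alpha>)"
          by (intro mult_left_mono) auto
        also have "\<dots> = ennreal b" using \<alpha> b(2) by (simp add: ennreal_mult[symmetric] del: ennreal_mult)
        finally show "ennreal \<alpha> * ennsqrt (wmeas w {x. \<alpha> < \<bar>hilbert f x\<bar>}) \<le> ennreal b"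
          by (simp add: E_def)
      qed
    qed
  qed
qed

end
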